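(* Let $\mathbf X_I=(X_1,\dots,X_d)$ satisfy conditions (i) and (ii) below, and let $I_1,\dots,I_p$ be a partition of $I$. Then for all $(\lambda_1,\dots,\lambda_p)\in(0,\infty)^p$, $$E\Big(\max_{1\le j\le p} M(I_j)^{\lambda_j}\Big)=\frac{L}{1+L},\qquad L=\ell_{\mathbf X_I}\Big(\sigma_1^{\eta}\sum_{j=1}^p\lambda_j^{\eta}\delta_1(I_j),\dots,\sigma_d^{\eta}\sum_{j=1}^p\lambda_j^{\eta}\delta_d(I_j)\Big).$$
   Context: Let $d\ge 1$, $I=\{1,\dots,d\}$, and let $I_1,\dots,I_p$ ($1\le p\le d$) be a partition of $I$ into nonempty blocks of consecutive indices. Let $\mathbf X_I=(X_1,\dots,X_d)$ be a random vector with joint distribution function $F_{\mathbf X_I}$ and univariate marginal distribution functions $F_i$ such that: (i) $F_i(t)=\exp(-\sigma_i t^{-1/\eta})$ for $t>0$, $i=1,\dots,d$, for some constants $\sigma_i>0$ and $\eta\in(0,1]$; (ii) the function $\ell_{\mathbf X_I}(t_1,\dots,t_d)=-\ln F_{\mathbf X_I}(t_1,\dots,t_d)$, $(t_1,\dots,t_d)\in(0,\infty)^d$, is homogeneous of order $-1/\eta$, i.e. $\ell_{\mathbf X_I}(s\mathbf t)=s^{-1/\eta}\ell_{\mathbf X_I}(\mathbf t)$ for all $s>0$. For $i\in I$ and $J\subseteq I$, $\delta_i(J)=1$ if $i\in J$ and $\delta_i(J)=0$ otherwise. For nonempty $J\subseteq I$, $M(J)=\max_{i\in J}F_i(X_i)$.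 *)

theory Defs
  imports "HOL-Probability.Probability"
begin

definition joint_cdf :: "'a measure \<Rightarrow> nat \<Rightarrow> (nat \<Rightarrow> 'a \<Rightarrow> real) \<Rightarrow> (nat \<Rightarrow> real) \<Rightarrow> real" where
  "joint_cdf P d X t = measure P {\<omega> \<in> space P. \<forall>i\<in>{1..d}. X i \<omega> \<le> t i}"

definition marg_cdf :: "'a measure \<Rightarrow> (nat \<Rightarrow> 'a \<Rightarrow> real) \<Rightarrow> nat \<Rightarrow> real \<Rightarrow> real" where
  "marg_cdf P X i x = measure P {\<omega> \<in> space P. X i \<omega> \<le> x}"

definition ell :: "'a measure \<Rightarrow> nat \<Rightarrow> (nat \<Rightarrow> 'a \<Rightarrow> real) \<Rightarrow> (nat \<Rightarrow> real) \<Rightarrow> real" where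
  "ell P d X t = - ln (joint_cdf P d X t)"

definition delta :: "nat \<Rightarrow> nat set \<Rightarrow> real" where
  "delta i J = (if i \<in> J then 1 else 0)"

definition Mmax :: "'a measure \<Rightarrow> (nat \<Rightarrow> 'a \<Rightarrow> real) \<Rightarrow> nat set \<Rightarrow> 'a \<Rightarrow> real" where
  "Mmax P X J \<omega> = Max ((\<lambda>i. marg_cdf P X i (X i \<omega>)) ` J)"

end

theory Submission
  imports Defs
begin
lemma layer_cake01:
  assumes P: "prob_space P" and Ym: "Y \<in> borel_measurable P"
    and Yb: "\<And>\<omega>. \<omega> \<in> space P \<Longrightarrow> 0 \<le> Y \<omega> \<and> Y \<omega> \<le> 1"
  shows "(\<integral>\<^sup>+\<omega>. ennreal (Y \<omega>) \<partial>P) =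
     (\<integral>\<^sup>+y. indicator {0<..<1} y * emeasure P {\<omega>\<in>space P. y < Y \<omega>} \<partial>lborel)"
proof -
  interpret prob_space P by fact
  interpret pair_sigma_finite P lborel by unfold_locales
  define f where "f \<omega> y = (if 0 < y \<and> y < 1 \<and> y < Y \<omega> then 1 else 0 :: ennreal)" for \<omega> y
  have fm: "case_prod f \<in> borel_measurable (P \<Otimes>\<^sub>M lborel)"
    unfolding f_def using Ym by measurable
  have "(\<integral>\<^sup>+\<omega>. ennreal (Y \<omega>) \<partial>P) = (\<integral>\<^sup>+\<omega>. (\<integral>\<^sup>+y. f \<omega> y \<partial>lborel) \<partial>P)"
  proof (rule nn_integral_cong)
    fix \<omega> assume w: "\<omega> \<in> space P"
    have "(\<lambda>y. f \<omega> y) = indicator {0<..<Y \<omega>}"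
      using Yb[OF w] by (auto simp: f_def indicator_def fun_eq_iff)
    then show "ennreal (Y \<omega>) = (\<integral>\<^sup>+y. f \<omega> y \<partial>lborel)"
      using Yb[OF w] by simp
  qed
  also have "\<dots> = (\<integral>\<^sup>+y. (\<integral>\<^sup>+\<omega>. f \<omega> y \<partial>P) \<partial>lborel)"
    using Fubini'[OF fm] by simp
  also have "\<dots> = (\<integral>\<^sup>+y. indicator {0<..<1} y * emeasure P {\<omega>\<in>space P. y < Y \<omega>} \<partial>lborel)"
  proof (rule nn_integral_cong)
    fix y :: real
    have "(\<integral>\<^sup>+\<omega>. f \<omega> y \<partial>P) = (\<integral>\<^sup>+\<omega>. indicator {0<..<1} y * indicator {\<omega>\<in>space P. y < Y \<omega>} \<omega> \<partial>P)"
      by (rule nn_integral_cong) (auto simp: f_def indicator_def)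
    also have "\<dots> = indicator {0<..<1} y * emeasure P {\<omega>\<in>space P. y < Y \<omega>}"
      using Ym by (subst nn_integral_cmult_indicator) auto
    finally show "(\<integral>\<^sup>+\<omega>. f \<omega> y \<partial>P) = indicator {0<..<1} y * emeasure P {\<omega>\<in>space P. y < Y \<omega>}" .
  qed
  finally show ?thesis .
qed

lemma int_1_minus_powr:
  assumes "0 \<le> (L::real)"
  shows "(\<integral>\<^sup>+y. indicator {0<..<1} y * ennreal (1 - y powr L) \<partial>lborel) = ennreal (L / (1 + L))"
proof -
  have h1: "((\<lambda>y::real. y powr L) has_integral (1 / (L+1))) {0..1}"
    using has_integral_powr_from_0[of L 1] assms by simp
  have h2: "((\<lambda>y::real. 1 - y powr L) has_integral (1 - 1 / (L+1))) {0..1}"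
    using has_integral_diff[OF has_integral_const_real[of "1::real" 0 1] h1] by simp
  have h3: "((\<lambda>y::real. 1 - y powr L) has_integral (L / (1 + L))) {0<..<1}"
    using h2 assms by (simp add: has_integral_Icc_iff_Ioo field_simps)
  have nn: "\<And>y. y \<in> {0<..<(1::real)} \<Longrightarrow> 0 \<le> 1 - y powr L"
    using assms by (auto intro!: powr_le1)
  have "(\<integral>\<^sup>+y. indicator {0<..<1} y * ennreal (1 - y powr L) \<partial>lborel)
      = (\<integral>\<^sup>+y. ennreal (1 - y powr L) * indicator {0<..<1} y \<partial>lborel)"
    by (simp add: mult.commute)
  also have "\<dots> = ennreal (L / (1 + L))"
    by (rule nn_integral_has_integral_lebesgue'[OF nn h3])
  finally show ?thesis .
qed

lemma powr_le_iff_root: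
  fixes a y l :: real
  assumes "0 \<le> a" "0 < l" "0 < y"
  shows "a powr l \<le> y \<longleftrightarrow> a \<le> y powr (1 / l)"
proof
  assume h: "a powr l \<le> y"
  have "a = (a powr l) powr (1/l)" using assms by (simp add: powr_powr)
  also have "\<dots> \<le> y powr (1/l)" using h assms by (intro powr_mono2) auto
  finally show "a \<le> y powr (1/l)" .
next
  assume h: "a \<le> y powr (1 / l)"
  have "a powr l \<le> (y powr (1/l)) powr l" using h assms by (intro powr_mono2) auto
  also have "\<dots> = y" using assms by (simp add: powr_powr)
  finally show "a powr l \<le> y" .
qed

theorem lemma2:
  fixes P :: "'a measure" and X :: "nat \<Rightarrow> 'a \<Rightarrow> real"
    and d p :: nat and Ib :: "nat \<Rightarrow> nat set"
    and \<sigma> :: "nat \<Rightarrow> real" and \<eta> :: real and lam :: "nat \<Rightarrow> real"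
  assumes "prob_space P"
    and "d \<ge> 1" and "1 \<le> p" and "p \<le> d"
    and rv: "\<And>i. i \<in> {1..d} \<Longrightarrow> X i \<in> borel_measurable P"
    and blocks_ne: "\<And>j. j \<in> {1..p} \<Longrightarrow> Ib j \<noteq> {}"
    and blocks_consec: "\<And>j. j \<in> {1..p} \<Longrightarrow> \<exists>a b. Ib j = {a..b}"
    and blocks_disj: "\<And>j k. j \<in> {1..p} \<Longrightarrow> k \<in> {1..p} \<Longrightarrow> j \<noteq> k \<Longrightarrow> Ib j \<inter> Ib k = {}"
    and blocks_cover: "(\<Union>j\<in>{1..p}. Ib j) = {1..d}"
    and sigma_pos: "\<And>i. i \<in> {1..d} \<Longrightarrow> \<sigma> i > 0"
    and eta: "0 < \<eta>" "\<eta> \<le> 1"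
    and marg: "\<And>i t. i \<in> {1..d} \<Longrightarrow> t > 0 \<Longrightarrow>
                 marg_cdf P X i t = exp (- \<sigma> i * t powr (- 1 / \<eta>))"
    and homog: "\<And>s t. s > 0 \<Longrightarrow> (\<forall>i\<in>{1..d}. t i > 0) \<Longrightarrow>
                 ell P d X (\<lambda>i. s * t i) = s powr (- 1 / \<eta>) * ell P d X t"
    and lam_pos: "\<And>j. j \<in> {1..p} \<Longrightarrow> lam j > 0"
  shows "(\<integral>\<omega>. Max ((\<lambda>j. Mmax P X (Ib j) \<omega> powr lam j) ` {1..p}) \<partial>P)
       = (let L = ell P d X (\<lambda>i. \<sigma> i powr \<eta> * (\<Sum>j=1..p. lam j powr \<eta> * delta i (Ib j)))
          in L / (1 + L))"
proof -
  interpret prob_space P by fact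
  define F where "F i x = marg_cdf P X i x" for i x
  have Fmeas: "{\<omega>\<in>space P. X i \<omega> \<le> x} \<in> sets P" if "i \<in> {1..d}" for i x
    using rv[OF that] by measurable
  have F_mono: "F i x \<le> F i y" if "i \<in> {1..d}" "x \<le> y" for i x y
    unfolding F_def marg_cdf_def using that Fmeas[OF that(1)]
    by (intro finite_measure_mono) auto
  have F_01: "0 \<le> F i x \<and> F i x \<le> 1" for i x
    unfolding F_def marg_cdf_def by auto
  have F_iff: "F i x \<le> F i t \<longleftrightarrow> x \<le> t" if "i \<in> {1..d}" "0 < t" for i x t
  proof
    assume "x \<le> t" then show "F i x \<le> F i t" using F_mono that by auto
  next
    assume h: "F i x \<le> F i t"
    show "x \<le> t"
    proof (rule ccontr)
      assume "\<not> x \<le> t"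
      then have xt: "t < x" by simp
      then have "x powr (-1/\<eta>) < t powr (-1/\<eta>)"
        using that eta by (intro powr_less_mono2_neg) (auto simp: divide_neg_pos)
      then have "- \<sigma> i * t powr (-1/\<eta>) < - \<sigma> i * x powr (-1/\<eta>)"
        using sigma_pos[OF that(1)] by simp
      then have "F i t < F i x" using xt that by (simp add: F_def marg)
      with h show False by simp
    qed
  qed
  have "\<forall>i\<in>{1..d}. \<exists>j. j \<in> {1..p} \<and> i \<in> Ib j" using blocks_cover by blast
  then obtain jb where jb: "\<And>i. i \<in> {1..d} \<Longrightarrow> jb i \<in> {1..p} \<and> i \<in> Ib (jb i)"
    by metis
  have jb_unique: "j = jb i" if "j \<in> {1..p}" "i \<in> Ib j" for i j
  proof -
    have i: "i \<in> {1..d}" using that blocks_cover by blast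
    show ?thesis using blocks_disj[of j "jb i"] jb[OF i] that by blast
  qed
  have Ib_sub: "Ib j \<subseteq> {1..d}" if "j \<in> {1..p}" for j using that blocks_cover by blast
  have Ib_fin: "finite (Ib j)" if "j \<in> {1..p}" for j using Ib_sub[OF that] finite_subset by blast
  define c where "c = (\<lambda>i. \<sigma> i powr \<eta> * (\<Sum>j=1..p. lam j powr \<eta> * delta i (Ib j)))"
  define L where "L = ell P d X c"
  have c_eq: "c i = (\<sigma> i * lam (jb i)) powr \<eta>" if i: "i \<in> {1..d}" for i
  proof -
    have "(\<Sum>j=1..p. lam j powr \<eta> * delta i (Ib j)) = (\<Sum>j=1..p. if j = jb i then lam j powr \<eta> else 0)"
    proof (rule sum.cong[OF refl])
      fix j assume j: "j \<in> {1..p}"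
      have "i \<in> Ib j \<longleftrightarrow> j = jb i" using jb[OF i] jb_unique[OF j] by blast
      then show "lam j powr \<eta> * delta i (Ib j) = (if j = jb i then lam j powr \<eta> else 0)"
        by (simp add: delta_def)
    qed
    also have "\<dots> = lam (jb i) powr \<eta>" using jb[OF i] by simp
    finally show ?thesis using sigma_pos[OF i] lam_pos jb[OF i]
      by (simp add: c_def powr_mult)
  qed
  have c_pos: "\<forall>i\<in>{1..d}. c i > 0"
  proof
    fix i assume i: "i \<in> {1..d}"
    have "\<sigma> i * lam (jb i) > 0" using sigma_pos[OF i] lam_pos jb[OF i] by simp
    then show "c i > 0" using c_eq[OF i] by (metis powr_gt_zero less_irrefl)
  qed
  have X1: "1 \<in> {1..d}" using \<open>d \<ge> 1\<close> by simp
  have joint_01: "0 \<le> joint_cdf P d X t \<and> joint_cdf P d X t < 1" if "\<forall>i\<in>{1..d}. t i > 0" for t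
  proof -
    have "joint_cdf P d X t \<le> F 1 (t 1)"
      unfolding joint_cdf_def F_def marg_cdf_def using X1 Fmeas[OF X1]
      by (intro finite_measure_mono) auto
    also have "\<dots> < 1"
    proof -
      have t1: "t 1 > 0" using that X1 by blast
      have "0 < \<sigma> 1 * t 1 powr (-1/\<eta>)" using t1 sigma_pos[OF X1] by simp
      then show ?thesis using t1 X1 by (simp add: F_def marg)
    qed
    finally show ?thesis by (simp add: joint_cdf_def)
  qed
  have joint_pos: "joint_cdf P d X t > 0" if tpos: "\<forall>i\<in>{1..d}. t i > 0" for t
  proof (rule ccontr)
    assume "\<not> joint_cdf P d X t > 0"
    then have j0: "joint_cdf P d X t = 0" using joint_01[OF tpos] by linarith
    define A where "A n = {\<omega>\<in>space P. \<forall>i\<in>{1..d}. X i \<omega> \<le> real (Suc n) * t i}" for n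
    have A0: "measure P (A n) = 0" for n
    proof -
      have pos: "\<forall>i\<in>{1..d}. real (Suc n) * t i > 0" using tpos by auto
      have "ell P d X (\<lambda>i. real (Suc n) * t i) = 0"
        using homog[of "real (Suc n)" t] tpos j0 by (simp add: ell_def)
      then have "ln (joint_cdf P d X (\<lambda>i. real (Suc n) * t i)) = 0" by (simp add: ell_def)
      moreover have "0 \<le> joint_cdf P d X (\<lambda>i. real (Suc n) * t i)"
        "joint_cdf P d X (\<lambda>i. real (Suc n) * t i) < 1" using joint_01[OF pos] by auto
      ultimately have "joint_cdf P d X (\<lambda>i. real (Suc n) * t i) = 0"
        by (metis ln_less_zero less_eq_real_def less_irrefl)
      then show ?thesis by (simp add: A_def joint_cdf_def)
    qed
    have As: "range A \<subseteq> sets P"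
      unfolding A_def using rv by auto
    have Ainc: "incseq A"
    proof (rule incseq_SucI)
      fix n show "A n \<subseteq> A (Suc n)"
        unfolding A_def
      proof clarify
        fix \<omega> i assume "\<omega> \<in> space P" "\<forall>i\<in>{1..d}. X i \<omega> \<le> real (Suc n) * t i" "i \<in> {1..d}"
        moreover have "real (Suc n) * t i \<le> real (Suc (Suc n)) * t i"
        proof -
          have "0 < t i" using tpos \<open>i \<in> {1..d}\<close> by blast
          then show ?thesis by (intro mult_right_mono) auto
        qed
        ultimately show "X i \<omega> \<le> real (Suc (Suc n)) * t i" by force
      qed
    qed
    have AU: "(\<Union>n. A n) = space P"
    proof
      show "(\<Union>n. A n) \<subseteq> space P" by (auto simp: A_def)
      show "space P \<subseteq> (\<Union>n. A n)"
      proof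
        fix \<omega> assume w: "\<omega> \<in> space P"
        have "\<forall>i\<in>{1..d}. eventually (\<lambda>n. X i \<omega> \<le> real (Suc n) * t i) sequentially"
        proof
          fix i assume i: "i \<in> {1..d}"
          obtain N :: nat where N: "X i \<omega> / t i \<le> real N" using real_arch_simple by blast
          show "eventually (\<lambda>n. X i \<omega> \<le> real (Suc n) * t i) sequentially"
            unfolding eventually_sequentially
          proof (intro exI allI impI)
            fix n assume "N \<le> n"
            then have "X i \<omega> / t i \<le> real (Suc n)" using N by linarith
            moreover have "0 < t i" using tpos i by blast
            ultimately show "X i \<omega> \<le> real (Suc n) * t i" by (simp add: pos_divide_le_eq)
          qed
        qed
        then have "eventually (\<lambda>n. \<forall>i\<in>{1..d}. X i \<omega> \<le> real (Suc n) * t i) sequentially"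
          by (rule eventually_ball_finite[OF finite_atLeastAtMost])
        then obtain N where "\<forall>n\<ge>N. \<forall>i\<in>{1..d}. X i \<omega> \<le> real (Suc n) * t i"
          unfolding eventually_sequentially by blast
        then have "\<forall>i\<in>{1..d}. X i \<omega> \<le> real (Suc N) * t i" by blast
        then show "\<omega> \<in> (\<Union>n. A n)" using w by (auto simp: A_def)
      qed
    qed
    have "(\<lambda>n. measure P (A n)) \<longlonglongrightarrow> measure P (\<Union>n. A n)"
      by (rule finite_Lim_measure_incseq[OF As Ainc])
    then have "(\<lambda>n. 0::real) \<longlonglongrightarrow> 1" using A0 AU by (simp add: prob_space)
    then show False using LIMSEQ_unique[OF tendsto_const, of "0::real" 1] by simp
  qed
  have L_nn: "0 \<le> L"
  proof -
    have "0 < joint_cdf P d X c" "joint_cdf P d X c < 1" using joint_pos[OF c_pos] joint_01[OF c_pos] by auto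
    then show ?thesis unfolding L_def ell_def by (simp add: ln_le_zero_iff less_imp_le)
  qed
  define Y where "Y \<omega> = Max ((\<lambda>j. Mmax P X (Ib j) \<omega> powr lam j) ` {1..p})" for \<omega>
  have M01: "0 \<le> Mmax P X (Ib j) \<omega> \<and> Mmax P X (Ib j) \<omega> \<le> 1" if j: "j \<in> {1..p}" for j \<omega>
  proof -
    have fin: "finite ((\<lambda>i. marg_cdf P X i (X i \<omega>)) ` Ib j)" using Ib_fin[OF j] by simp
    have ne: "((\<lambda>i. marg_cdf P X i (X i \<omega>)) ` Ib j) \<noteq> {}" using blocks_ne[OF j] by simp
    obtain i where "i \<in> Ib j" using blocks_ne[OF j] by blast
    then have "marg_cdf P X i (X i \<omega>) \<le> Mmax P X (Ib j) \<omega>" unfolding Mmax_def using fin by auto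
    moreover have "0 \<le> marg_cdf P X i (X i \<omega>)" using F_01 by (simp add: F_def)
    moreover have "Mmax P X (Ib j) \<omega> \<le> 1" unfolding Mmax_def using fin ne F_01 by (auto simp: F_def)
    ultimately show ?thesis by linarith
  qed
  have Y01: "0 \<le> Y \<omega> \<and> Y \<omega> \<le> 1" for \<omega>
  proof -
    have fin: "finite ((\<lambda>j. Mmax P X (Ib j) \<omega> powr lam j) ` {1..p})" by simp
    have ne: "((\<lambda>j. Mmax P X (Ib j) \<omega> powr lam j) ` {1..p}) \<noteq> {}" using \<open>1 \<le> p\<close> by simp
    have "Mmax P X (Ib 1) \<omega> powr lam 1 \<le> Y \<omega>" unfolding Y_def using fin \<open>1 \<le> p\<close> by auto
    moreover have "0 \<le> Mmax P X (Ib 1) \<omega> powr lam 1" by simp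
    moreover have "Y \<omega> \<le> 1" unfolding Y_def Max_le_iff[OF fin ne]
    proof
      fix z assume "z \<in> (\<lambda>j. Mmax P X (Ib j) \<omega> powr lam j) ` {1..p}"
      then obtain j where j: "j \<in> {1..p}" and z: "z = Mmax P X (Ib j) \<omega> powr lam j" by blast
      show "z \<le> 1" unfolding z
        using M01[OF j] lam_pos[OF j] by (intro powr_le1) auto
    qed
    ultimately show ?thesis by linarith
  qed
  have Fm: "(\<lambda>x. marg_cdf P X i x) \<in> borel_measurable borel" if "i \<in> {1..d}" for i
    using F_mono[OF that] unfolding F_def by (intro borel_measurable_mono) (auto simp: mono_def)
  have Ym: "Y \<in> borel_measurable P"
  proof -
    have Mm: "(\<lambda>\<omega>. Mmax P X (Ib j) \<omega>) \<in> borel_measurable P" if j: "j \<in> {1..p}" for j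
      unfolding Mmax_def
    proof (rule borel_measurable_Max[OF Ib_fin[OF j]])
      fix i assume "i \<in> Ib j"
      then have i: "i \<in> {1..d}" using Ib_sub[OF j] by blast
      show "(\<lambda>\<omega>. marg_cdf P X i (X i \<omega>)) \<in> borel_measurable P"
        by (rule measurable_compose[OF rv[OF i] Fm[OF i]])
    qed
    show ?thesis unfolding Y_def
      by (rule borel_measurable_Max[OF finite_atLeastAtMost]) (use Mm in measurable)
  qed
  have cdfY: "measure P {\<omega>\<in>space P. Y \<omega> \<le> y} = y powr L" if y: "0 < y" "y < 1" for y
  proof -
    define a where "a = - ln y"
    have a: "0 < a" using y by (simp add: a_def)
    define s where "s = a powr (- \<eta>)"
    have s: "0 < s" using a by (simp add: s_def)
    have Fsc: "F i (s * c i) = y powr (1 / lam (jb i))" if i: "i \<in> {1..d}" for i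
    proof -
      define b where "b = \<sigma> i * lam (jb i)"
      have b: "0 < b" using sigma_pos[OF i] lam_pos jb[OF i] by (simp add: b_def)
      have "(s * c i) powr (-1/\<eta>) = (a powr (-\<eta>)) powr (-1/\<eta>) * (b powr \<eta>) powr (-1/\<eta>)"
        using c_eq[OF i] a b by (simp add: s_def b_def powr_mult)
      also have "\<dots> = a powr ((-\<eta>) * (-1/\<eta>)) * b powr (\<eta> * (-1/\<eta>))"
        by (simp only: powr_powr)
      also have "(-\<eta>) * (-1/\<eta>) = 1" using eta by simp
      also have "\<eta> * (-1/\<eta>) = -1" using eta by simp
      also have "a powr 1 * b powr (-1) = a / b" using a b by (simp add: powr_minus divide_inverse)
      finally have e: "(s * c i) powr (-1/\<eta>) = a / b" .
      have "F i (s * c i) = exp (- \<sigma> i * (a / b))"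
        using marg[OF i, of "s * c i"] s c_pos i e by (simp add: F_def)
      also have "\<dots> = exp ((1 / lam (jb i)) * ln y)"
        using sigma_pos[OF i] by (simp add: b_def a_def)
      also have "\<dots> = y powr (1 / lam (jb i))" using y by (simp add: powr_def)
      finally show ?thesis .
    qed
    have set_eq: "{\<omega>\<in>space P. Y \<omega> \<le> y} = {\<omega>\<in>space P. \<forall>i\<in>{1..d}. X i \<omega> \<le> s * c i}"
    proof -
      have "Y \<omega> \<le> y \<longleftrightarrow> (\<forall>i\<in>{1..d}. X i \<omega> \<le> s * c i)" for \<omega>
      proof -
        have "Y \<omega> \<le> y \<longleftrightarrow> (\<forall>j\<in>{1..p}. Mmax P X (Ib j) \<omega> powr lam j \<le> y)"
          unfolding Y_def using \<open>1 \<le> p\<close> by (subst Max_le_iff) auto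
        also have "\<dots> \<longleftrightarrow> (\<forall>j\<in>{1..p}. \<forall>i\<in>Ib j. F i (X i \<omega>) \<le> y powr (1 / lam j))"
        proof (rule ball_cong[OF refl])
          fix j assume j: "j \<in> {1..p}"
          have "Mmax P X (Ib j) \<omega> powr lam j \<le> y \<longleftrightarrow> Mmax P X (Ib j) \<omega> \<le> y powr (1 / lam j)"
            by (rule powr_le_iff_root[OF conjunct1[OF M01[OF j]] lam_pos[OF j] y(1)])
          also have "\<dots> \<longleftrightarrow> (\<forall>i\<in>Ib j. F i (X i \<omega>) \<le> y powr (1 / lam j))"
            unfolding Mmax_def F_def using Ib_fin[OF j] blocks_ne[OF j] by (subst Max_le_iff) auto
          finally show "Mmax P X (Ib j) \<omega> powr lam j \<le> y \<longleftrightarrow> (\<forall>i\<in>Ib j. F i (X i \<omega>) \<le> y powr (1 / lam j))" .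
        qed
        also have "\<dots> \<longleftrightarrow> (\<forall>i\<in>{1..d}. F i (X i \<omega>) \<le> y powr (1 / lam (jb i)))"
        proof
          assume h: "\<forall>j\<in>{1..p}. \<forall>i\<in>Ib j. F i (X i \<omega>) \<le> y powr (1 / lam j)"
          show "\<forall>i\<in>{1..d}. F i (X i \<omega>) \<le> y powr (1 / lam (jb i))"
          proof
            fix i assume i: "i \<in> {1..d}"
            show "F i (X i \<omega>) \<le> y powr (1 / lam (jb i))"
              using h jb[OF i] by blast
          qed
        next
          assume h: "\<forall>i\<in>{1..d}. F i (X i \<omega>) \<le> y powr (1 / lam (jb i))"
          show "\<forall>j\<in>{1..p}. \<forall>i\<in>Ib j. F i (X i \<omega>) \<le> y powr (1 / lam j)"
          proof (intro ballI)
            fix j i assume j: "j \<in> {1..p}" and i: "i \<in> Ib j"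
            have "i \<in> {1..d}" using Ib_sub[OF j] i by blast
            moreover have "j = jb i" using jb_unique[OF j i] .
            ultimately show "F i (X i \<omega>) \<le> y powr (1 / lam j)" using h by simp
          qed
        qed
        also have "\<dots> \<longleftrightarrow> (\<forall>i\<in>{1..d}. X i \<omega> \<le> s * c i)"
        proof (rule ball_cong[OF refl])
          fix i assume i: "i \<in> {1..d}"
          have "0 < s * c i" using s c_pos i by simp
          then show "F i (X i \<omega>) \<le> y powr (1 / lam (jb i)) \<longleftrightarrow> X i \<omega> \<le> s * c i"
            using F_iff[OF i \<open>0 < s * c i\<close>, of "X i \<omega>"] Fsc[OF i] by simp
        qed
        finally show ?thesis .
      qed
      then show ?thesis by auto
    qed
    have "measure P {\<omega>\<in>space P. Y \<omega> \<le> y} = joint_cdf P d X (\<lambda>i. s * c i)"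
      unfolding set_eq joint_cdf_def ..
    also have "\<dots> = exp (- ell P d X (\<lambda>i. s * c i))"
      using joint_pos[of "\<lambda>i. s * c i"] s c_pos by (simp add: ell_def)
    also have "ell P d X (\<lambda>i. s * c i) = s powr (-1/\<eta>) * L"
      using homog[OF s c_pos] by (simp add: L_def)
    also have "s powr (-1/\<eta>) = a" using a eta by (simp add: s_def powr_powr)
    also have "exp (- (a * L)) = y powr L" using y by (simp add: powr_def a_def)
    finally show ?thesis .
  qed
  have tail: "emeasure P {\<omega>\<in>space P. y < Y \<omega>} = ennreal (1 - y powr L)" if y: "0 < y" "y < 1" for y
  proof -
    have "{\<omega>\<in>space P. y < Y \<omega>} = space P - {\<omega>\<in>space P. Y \<omega> \<le> y}" by auto
    moreover have "{\<omega>\<in>space P. Y \<omega> \<le> y} \<in> sets P" using Ym by measurable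
    ultimately show ?thesis
      using cdfY[OF y] by (simp add: emeasure_eq_measure prob_compl)
  qed
  have "(\<integral>\<^sup>+\<omega>. ennreal (Y \<omega>) \<partial>P) = (\<integral>\<^sup>+y. indicator {0<..<1} y * emeasure P {\<omega>\<in>space P. y < Y \<omega>} \<partial>lborel)"
    by (rule layer_cake01[OF \<open>prob_space P\<close> Ym]) (use Y01 in auto)
  also have "\<dots> = (\<integral>\<^sup>+y. indicator {0<..<1} y * ennreal (1 - y powr L) \<partial>lborel)"
    by (rule nn_integral_cong) (auto simp: indicator_def tail)
  also have "\<dots> = ennreal (L / (1 + L))" by (rule int_1_minus_powr[OF L_nn])
  finally have nn: "(\<integral>\<^sup>+\<omega>. ennreal (Y \<omega>) \<partial>P) = ennreal (L / (1 + L))" .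
  have intY: "integrable P Y"
    by (rule integrable_const_bound[where B=1]) (use Y01 Ym in auto)
  have "(\<integral>\<^sup>+\<omega>. ennreal (Y \<omega>) \<partial>P) = ennreal (\<integral>\<omega>. Y \<omega> \<partial>P)"
    by (rule nn_integral_eq_integral[OF intY]) (use Y01 in auto)
  with nn have "ennreal (\<integral>\<omega>. Y \<omega> \<partial>P) = ennreal (L / (1 + L))" by simp
  moreover have "0 \<le> (\<integral>\<omega>. Y \<omega> \<partial>P)" using Y01 by (intro integral_nonneg_AE) auto
  moreover have "0 \<le> L / (1 + L)" using L_nn by simp
  ultimately have "(\<integral>\<omega>. Y \<omega> \<partial>P) = L / (1 + L)" by simp
  then show ?thesis unfolding Y_def L_def c_def Let_def by simp
qed

end
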